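(* Let $X$ be a real Hilbert space, let $\alpha\in\left]0,1\right[$, $\beta>0$, $\delta\in\mathbb{R}\setminus\{0\}$, let $\{i,j\}=\{1,2\}$, and let $R_1,R_2\colon X\to X$. Suppose $\tfrac1\delta R_i$ is $\alpha$-averaged and $R_j$ is $\tfrac1\beta$-cocoercive. Set $\bar\alpha=\tfrac1{2-\alpha}$. Then $\bar\alpha\in\left]0,1\right[$ and there exists a nonexpansive $N\colon X\to X$ such that $R_2R_1=\beta\delta\big((1-\bar\alpha)\mathrm{Id}+\bar\alpha N\big)$.
   Context: For $\alpha\in\left]0,1\right[$, $T\colon X\to X$ is $\alpha$-averaged if $T=(1-\alpha)\mathrm{Id}+\alpha N$ for some nonexpansive ($1$-Lipschitz) $N\colon X\to X$. For $\beta>0$, $T$ is $\tfrac1\beta$-cocoercive if $T=\tfrac\beta2(\mathrm{Id}+N)$ for some nonexpansive $N\colon X\to X$. *)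

theory Defs
  imports "HOL-Analysis.Analysis"
begin

definition nonexpansive :: "('a::real_normed_vector \<Rightarrow> 'a) \<Rightarrow> bool" where
  "nonexpansive N \<longleftrightarrow> (\<forall>x y. norm (N x - N y) \<le> norm (x - y))"

definition averaged :: "real \<Rightarrow> ('a::real_normed_vector \<Rightarrow> 'a) \<Rightarrow> bool" where
  "averaged \<alpha> T \<longleftrightarrow> 0 < \<alpha> \<and> \<alpha> < 1 \<and>
     (\<exists>N. nonexpansive N \<and> T = (\<lambda>x. (1 - \<alpha>) *\<^sub>R x + \<alpha> *\<^sub>R N x))"

text \<open>T is (1/beta)-cocoercive: T = (beta/2)(Id + N) with N nonexpansive (beta > 0).\<close>
definition cocoercive_inv :: "real \<Rightarrow> ('a::real_normed_vector \<Rightarrow> 'a) \<Rightarrow> bool" where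
  "cocoercive_inv \<beta> T \<longleftrightarrow> 0 < \<beta> \<and>
     (\<exists>N. nonexpansive N \<and> T = (\<lambda>x. (\<beta> / 2) *\<^sub>R (x + N x)))"

end

theory Submission
  imports Defs
begin

lemma ne_le: "nonexpansive N \<Longrightarrow> inner (N x - N y) (N x - N y) \<le> inner (x - y) (x - y)"
  unfolding nonexpansive_def by (simp add: norm_le[symmetric])

lemma avg_ineq:
  fixes N :: "'a::real_inner \<Rightarrow> 'a"
  assumes "nonexpansive N" "0 \<le> a"
  shows "a * (norm (((1-a) *\<^sub>R x + a *\<^sub>R N x) - ((1-a) *\<^sub>R y + a *\<^sub>R N y)))^2
     + (1-a) * (norm ((x - y) - (((1-a) *\<^sub>R x + a *\<^sub>R N x) - ((1-a) *\<^sub>R y + a *\<^sub>R N y))))^2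
     \<le> a * (norm (x-y))^2"
proof -
  define u where "u = x - y"
  define d where "d = N x - N y"
  have e1: "((1-a) *\<^sub>R x + a *\<^sub>R N x) - ((1-a) *\<^sub>R y + a *\<^sub>R N y) = (1-a) *\<^sub>R u + a *\<^sub>R d"
    by (simp add: u_def d_def algebra_simps)
  have e2: "u - ((1-a)*\<^sub>R u + a *\<^sub>R d) = a *\<^sub>R (u - d)" by (simp add: algebra_simps)
  have dd: "d \<bullet> d \<le> u \<bullet> u" using ne_le[OF assms(1)] by (simp add: u_def d_def)
  have m: "a^2 * (d \<bullet> d) \<le> a^2 * (u \<bullet> u)" using dd by (simp add: mult_left_mono)
  have "a * (norm ((1-a) *\<^sub>R u + a *\<^sub>R d))^2 + (1-a) * (norm (a *\<^sub>R (u - d)))^2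
      = a*(1-a)*(u \<bullet> u) + a^2 * (d \<bullet> d)"
    unfolding power2_norm_eq_inner by (simp add: inner_simps inner_commute algebra_simps power2_eq_square)
  also have "\<dots> \<le> a * (u \<bullet> u)" using m by (simp add: algebra_simps power2_eq_square)
  finally show ?thesis unfolding e1 u_def[symmetric] e2 by (simp add: power2_norm_eq_inner)
qed

lemma cross:
  fixes a b :: "'a::real_inner"
  shows "c*(1-c)*(norm (a+b))^2 \<le> (1-c)*(norm a)^2 + c*(norm b)^2"
proof -
  have eq: "(1-c)*(norm a)^2 + c*(norm b)^2 - c*(1-c)*(norm (a+b))^2 = (norm ((1-c)*\<^sub>R a - c*\<^sub>R b))^2"
    unfolding power2_norm_eq_inner by (simp add: inner_simps inner_commute algebra_simps power2_eq_square)
  have "0 \<le> (norm ((1-c)*\<^sub>R a - c*\<^sub>R b))^2" by simp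
  then show ?thesis using eq by linarith
qed

lemma key1:
  fixes u p w :: "'a::real_inner"
  assumes "0 < \<alpha>" "\<alpha> < 1"
    and A: "\<alpha> * (norm p)^2 + (1-\<alpha>) * (norm (u-p))^2 \<le> \<alpha> * (norm u)^2"
    and B: "(norm w)^2 + (norm (p-w))^2 \<le> (norm p)^2"
  shows "(norm w)^2 + (1-\<alpha>) * (norm (u-w))^2 \<le> (norm u)^2"
proof -
  have c: "\<alpha>*(1-\<alpha>)*(norm (u-w))^2 \<le> (1-\<alpha>)*(norm (u-p))^2 + \<alpha>*(norm (p-w))^2"
    using cross[of \<alpha> "u-p" "p-w"] by simp
  have "\<alpha> * ((norm w)^2 + (1-\<alpha>) * (norm (u-w))^2) \<le> \<alpha> * (norm u)^2"
  proof -
    have "\<alpha> * (norm w)^2 + \<alpha> * (norm (p-w))^2 \<le> \<alpha> * (norm p)^2"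
      using B assms(1) by (metis distrib_left mult_left_mono less_imp_le)
    then show ?thesis using A c by (simp add: algebra_simps)
  qed
  then show ?thesis using assms(1) by simp
qed

lemma key2:
  fixes u p w :: "'a::real_inner"
  assumes "0 < \<alpha>" "\<alpha> < 1"
    and B: "(norm p)^2 + (norm (u-p))^2 \<le> (norm u)^2"
    and A: "\<alpha> * (norm w)^2 + (1-\<alpha>) * (norm (p-w))^2 \<le> \<alpha> * (norm p)^2"
  shows "(norm w)^2 + (1-\<alpha>) * (norm (u-w))^2 \<le> (norm u)^2"
proof -
  have c: "\<alpha>*(1-\<alpha>)*(norm (u-w))^2 \<le> \<alpha>*(norm (u-p))^2 + (1-\<alpha>)*(norm (p-w))^2"
    using cross[of "1-\<alpha>" "u-p" "p-w"] by (simp add: algebra_simps)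
  have "\<alpha> * ((norm w)^2 + (1-\<alpha>) * (norm (u-w))^2) \<le> \<alpha> * (norm u)^2"
  proof -
    have "\<alpha> * (norm p)^2 + \<alpha> * (norm (u-p))^2 \<le> \<alpha> * (norm u)^2"
      using B assms(1) by (metis distrib_left mult_left_mono less_imp_le)
    then show ?thesis using A c by (simp add: algebra_simps)
  qed
  then show ?thesis using assms(1) by simp
qed

lemma ineq_avg:
  fixes T :: "'a::real_inner \<Rightarrow> 'a"
  assumes "0 < a"
    and H: "\<And>x y. a * (norm (T x - T y))^2 + (1-a) * (norm ((x-y) - (T x - T y)))^2 \<le> a * (norm (x-y))^2"
  shows "\<exists>N. nonexpansive N \<and> T = (\<lambda>x. (1-a) *\<^sub>R x + a *\<^sub>R N x)"
proof (intro exI conjI)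
  let ?N = "\<lambda>x. (1/a) *\<^sub>R (T x - (1-a) *\<^sub>R x)"
  show "T = (\<lambda>x. (1-a) *\<^sub>R x + a *\<^sub>R ?N x)" using assms(1) by (auto simp: fun_eq_iff)
  show "nonexpansive ?N" unfolding nonexpansive_def
  proof (intro allI)
    fix x y :: 'a
    define u where "u = x - y"
    define v where "v = T x - T y"
    have h: "a * (v \<bullet> v) + (1-a) * ((u - v) \<bullet> (u - v)) \<le> a * (u \<bullet> u)"
      using H[of x y] by (simp add: u_def v_def power2_norm_eq_inner)
    have h2: "a * (v \<bullet> v) + (1-a) * (u \<bullet> u) - 2*(1-a)*(u \<bullet> v) + (1-a)*(v\<bullet>v) \<le> a * (u \<bullet> u)"
      using h by (simp add: inner_simps inner_commute algebra_simps)
    have h3: "v \<bullet> v - 2*(1-a)*(u \<bullet> v) + (1-a)*(u\<bullet>u) \<le> a * (u \<bullet> u)"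
      using h2 by (simp add: algebra_simps)
    have eq: "(v - (1-a)*\<^sub>R u) \<bullet> (v - (1-a)*\<^sub>R u) = v \<bullet> v - 2*(1-a)*(u \<bullet> v) + (1-a)*(u\<bullet>u) - a*(1-a)*(u\<bullet>u)"
      by (simp add: inner_simps inner_commute algebra_simps power2_eq_square)
    have sq: "(v - (1-a)*\<^sub>R u) \<bullet> (v - (1-a)*\<^sub>R u) \<le> (a *\<^sub>R u) \<bullet> (a *\<^sub>R u)"
      using h3 eq by (simp add: algebra_simps)
    have "norm (v - (1-a)*\<^sub>R u) \<le> norm (a *\<^sub>R u)" using sq unfolding norm_le by simp
    then have n: "norm (v - (1-a)*\<^sub>R u) \<le> a * norm u" using assms(1) by simp
    have "?N x - ?N y = (1/a) *\<^sub>R (v - (1-a)*\<^sub>R u)"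
      by (simp add: u_def v_def algebra_simps)
    then have "norm (?N x - ?N y) = (1/a) * norm (v - (1-a)*\<^sub>R u)" using assms(1) by simp
    also have "\<dots> \<le> (1/a) * (a * norm u)" using n assms(1) by (simp add: pos_divide_le_eq mult.commute)
    also have "\<dots> = norm (x - y)" using assms(1) by (simp add: u_def)
    finally show "norm (?N x - ?N y) \<le> norm (x - y)" .
  qed
qed

lemma ne_scale:
  fixes M :: "'a::real_normed_vector \<Rightarrow> 'a"
  assumes "nonexpansive M" "c \<noteq> 0"
  shows "nonexpansive (\<lambda>y. (1/c) *\<^sub>R M (c *\<^sub>R y))"
  unfolding nonexpansive_def
proof (intro allI)
  fix x y :: 'a
  have "(1/c) *\<^sub>R M (c *\<^sub>R x) - (1/c) *\<^sub>R M (c *\<^sub>R y) = (1/c) *\<^sub>R (M (c *\<^sub>R x) - M (c *\<^sub>R y))"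
    by (simp add: algebra_simps)
  then have "norm ((1/c) *\<^sub>R M (c *\<^sub>R x) - (1/c) *\<^sub>R M (c *\<^sub>R y)) = (1/\<bar>c\<bar>) * norm (M (c *\<^sub>R x) - M (c *\<^sub>R y))"
    by simp
  also have "\<dots> \<le> (1/\<bar>c\<bar>) * norm (c *\<^sub>R x - c *\<^sub>R y)"
    using assms(1) unfolding nonexpansive_def by (simp add: divide_right_mono)
  also have "\<dots> = norm (x - y)" using assms(2)
    by (simp flip: scaleR_diff_right)
  finally show "norm ((1/c) *\<^sub>R M (c *\<^sub>R x) - (1/c) *\<^sub>R M (c *\<^sub>R y)) \<le> norm (x - y)" .
qed

lemma comp_avg:
  fixes T G :: "'a::real_inner \<Rightarrow> 'a"
  assumes a: "0 < \<alpha>" "\<alpha> < 1" and n1: "nonexpansive N1" and n2: "nonexpansive N2"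
    and T: "T = (\<lambda>x. (1-\<alpha>) *\<^sub>R x + \<alpha> *\<^sub>R N1 x)"
    and G: "G = (\<lambda>x. (1-1/2) *\<^sub>R x + (1/2) *\<^sub>R N2 x)"
    and S: "S = G \<circ> T \<or> S = T \<circ> G"
  shows "\<exists>N. nonexpansive N \<and> S = (\<lambda>x. (1 - 1/(2-\<alpha>)) *\<^sub>R x + (1/(2-\<alpha>)) *\<^sub>R N x)"
proof (rule ineq_avg)
  show "0 < 1/(2-\<alpha>)" using a by simp
  fix x y
  have AT: "\<And>x y. \<alpha> * (norm (T x - T y))^2 + (1-\<alpha>) * (norm ((x-y) - (T x - T y)))^2 \<le> \<alpha> * (norm (x-y))^2"
    using avg_ineq[OF n1, of \<alpha>] a T by simp
  have BG0: "\<And>x y. (1/2) * (norm (G x - G y))^2 + (1-1/2) * (norm ((x-y) - (G x - G y)))^2 \<le> (1/2) * (norm (x-y))^2"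
    using avg_ineq[OF n2, of "1/2"] G by simp
  have BG: "\<And>x y. (norm (G x - G y))^2 + (norm ((x-y) - (G x - G y)))^2 \<le> (norm (x-y))^2"
    using BG0 by (simp add: algebra_simps)
  have K: "(norm (S x - S y))^2 + (1-\<alpha>) * (norm ((x-y) - (S x - S y)))^2 \<le> (norm (x-y))^2"
    using S
  proof
    assume "S = G \<circ> T"
    then show ?thesis
      using key1[OF a, of "T x - T y" "x - y" "G (T x) - G (T y)"] AT[of x y] BG[of "T x" "T y"]
      by simp
  next
    assume "S = T \<circ> G"
    then show ?thesis
      using key2[OF a, of "G x - G y" "x - y" "T (G x) - T (G y)"] BG[of x y] AT[of "G x" "G y"]
      by simp
  qed
  have gen: "\<And>A B C::real. A + (1-\<alpha>) * B \<le> C \<Longrightarrow> (1/(2-\<alpha>)) * A + (1 - 1/(2-\<alpha>)) * B \<le> (1/(2-\<alpha>)) * C"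
  proof -
    fix A B C :: real
    assume h: "A + (1-\<alpha>) * B \<le> C"
    have p: "0 < 2 - \<alpha>" using a by simp
    have "(1/(2-\<alpha>)) * A + (1 - 1/(2-\<alpha>)) * B = (A + (1-\<alpha>) * B) / (2-\<alpha>)"
    proof -
      have "1 - 1/(2-\<alpha>) = (1-\<alpha>)/(2-\<alpha>)" using p by (simp add: field_simps)
      then show ?thesis by (simp add: add_divide_distrib)
    qed
    also have "\<dots> \<le> C / (2-\<alpha>)" using h p by (simp add: divide_right_mono)
    finally show "(1/(2-\<alpha>)) * A + (1 - 1/(2-\<alpha>)) * B \<le> (1/(2-\<alpha>)) * C" by simp
  qed
  show "(1/(2-\<alpha>)) * (norm (S x - S y))^2 + (1 - 1/(2-\<alpha>)) * (norm ((x-y) - (S x - S y)))^2 \<le> (1/(2-\<alpha>)) * (norm (x-y))^2"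
    by (rule gen[OF K])
qed

theorem mainTheorem8:
  fixes R1 R2 :: "'a::{real_inner, complete_space} \<Rightarrow> 'a"
    and \<alpha> \<beta> \<delta> :: real
  assumes "0 < \<alpha>" and "\<alpha> < 1" and "0 < \<beta>" and "\<delta> \<noteq> 0"
    and "(averaged \<alpha> (\<lambda>x. (1 / \<delta>) *\<^sub>R R1 x) \<and> cocoercive_inv \<beta> R2)
       \<or> (averaged \<alpha> (\<lambda>x. (1 / \<delta>) *\<^sub>R R2 x) \<and> cocoercive_inv \<beta> R1)"
  shows "0 < 1 / (2 - \<alpha>) \<and> 1 / (2 - \<alpha>) < 1 \<and>
    (\<exists>N. nonexpansive N \<and>
       R2 \<circ> R1 = (\<lambda>x. (\<beta> * \<delta>) *\<^sub>R ((1 - 1 / (2 - \<alpha>)) *\<^sub>R x + (1 / (2 - \<alpha>)) *\<^sub>R N x)))"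
proof (intro conjI)
  show "0 < 1 / (2 - \<alpha>)" "1 / (2 - \<alpha>) < 1" using assms(1,2) by (auto simp: field_simps)
  have a: "0 < \<alpha>" "\<alpha> < 1" using assms(1,2) by auto
  have bd: "\<beta> * \<delta> \<noteq> 0" using assms(3,4) by simp
  show "\<exists>N. nonexpansive N \<and>
       R2 \<circ> R1 = (\<lambda>x. (\<beta> * \<delta>) *\<^sub>R ((1 - 1 / (2 - \<alpha>)) *\<^sub>R x + (1 / (2 - \<alpha>)) *\<^sub>R N x))"
    using assms(5)
  proof
    assume h: "averaged \<alpha> (\<lambda>x. (1 / \<delta>) *\<^sub>R R1 x) \<and> cocoercive_inv \<beta> R2"
    then obtain N1 M where n1: "nonexpansive N1" and e1: "(\<lambda>x. (1 / \<delta>) *\<^sub>R R1 x) = (\<lambda>x. (1-\<alpha>) *\<^sub>R x + \<alpha> *\<^sub>R N1 x)"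
      and nM: "nonexpansive M" and e2: "R2 = (\<lambda>x. (\<beta> / 2) *\<^sub>R (x + M x))"
      unfolding averaged_def cocoercive_inv_def by blast
    define T where "T = (\<lambda>x::'a. (1-\<alpha>) *\<^sub>R x + \<alpha> *\<^sub>R N1 x)"
    define G where "G = (\<lambda>x::'a. (1-1/2) *\<^sub>R x + (1/2) *\<^sub>R (\<lambda>y. (1/\<delta>) *\<^sub>R M (\<delta> *\<^sub>R y)) x)"
    obtain N where nN: "nonexpansive N" and eN: "G \<circ> T = (\<lambda>x. (1 - 1/(2-\<alpha>)) *\<^sub>R x + (1/(2-\<alpha>)) *\<^sub>R N x)"
      using comp_avg[OF a n1 ne_scale[OF nM assms(4)] T_def G_def] by blast
    have R1: "R1 x = \<delta> *\<^sub>R T x" for x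
    proof -
      have "(1 / \<delta>) *\<^sub>R R1 x = T x" using fun_cong[OF e1, of x] T_def by simp
      then show ?thesis using assms(4) by (metis scaleR_scaleR divide_self_if mult.commute times_divide_eq_left mult_1 scaleR_one)
    qed
    have "R2 \<circ> R1 = (\<lambda>x. (\<beta> * \<delta>) *\<^sub>R (G \<circ> T) x)"
      using assms(4) by (auto simp: fun_eq_iff R1 e2 G_def algebra_simps)
    then show ?thesis using nN eN by auto
  next
    assume h: "averaged \<alpha> (\<lambda>x. (1 / \<delta>) *\<^sub>R R2 x) \<and> cocoercive_inv \<beta> R1"
    then obtain N1 M where n1: "nonexpansive N1" and e1: "(\<lambda>x. (1 / \<delta>) *\<^sub>R R2 x) = (\<lambda>x. (1-\<alpha>) *\<^sub>R x + \<alpha> *\<^sub>R N1 x)"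
      and nM: "nonexpansive M" and e2: "R1 = (\<lambda>x. (\<beta> / 2) *\<^sub>R (x + M x))"
      unfolding averaged_def cocoercive_inv_def by blast
    have bne: "\<beta> \<noteq> 0" using assms(3) by simp
    define T where "T = (\<lambda>x::'a. (1-\<alpha>) *\<^sub>R x + \<alpha> *\<^sub>R (\<lambda>y. (1/\<beta>) *\<^sub>R N1 (\<beta> *\<^sub>R y)) x)"
    define G where "G = (\<lambda>x::'a. (1-1/2) *\<^sub>R x + (1/2) *\<^sub>R M x)"
    obtain N where nN: "nonexpansive N" and eN: "T \<circ> G = (\<lambda>x. (1 - 1/(2-\<alpha>)) *\<^sub>R x + (1/(2-\<alpha>)) *\<^sub>R N x)"
      using comp_avg[OF a ne_scale[OF n1 bne] nM T_def G_def] by blast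
    have R2: "R2 x = \<delta> *\<^sub>R ((1-\<alpha>) *\<^sub>R x + \<alpha> *\<^sub>R N1 x)" for x
    proof -
      have "(1 / \<delta>) *\<^sub>R R2 x = (1-\<alpha>) *\<^sub>R x + \<alpha> *\<^sub>R N1 x" using fun_cong[OF e1, of x] by simp
      then show ?thesis using assms(4) by (metis scaleR_scaleR divide_self_if mult.commute times_divide_eq_left mult_1 scaleR_one)
    qed
    have "R2 \<circ> R1 = (\<lambda>x. (\<beta> * \<delta>) *\<^sub>R (T \<circ> G) x)"
    proof (rule ext)
      fix x
      have c: "\<alpha> * (\<beta> * \<delta>) / 2 + (\<beta> * \<delta> - \<alpha> * (\<beta> * \<delta>)) / 2 = \<beta> * \<delta> / 2" by (simp add: field_simps)
      have "(\<alpha> * (\<beta> * \<delta>) / 2) *\<^sub>R (x + M x) + ((\<beta> * \<delta> - \<alpha> * (\<beta> * \<delta>)) / 2) *\<^sub>R (x + M x) = (\<beta> * \<delta> / 2) *\<^sub>R (x + M x)"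
        by (simp only: scaleR_add_left[symmetric] c)
      then show "(R2 \<circ> R1) x = (\<beta> * \<delta>) *\<^sub>R (T \<circ> G) x"
        using assms(4) bne by (simp add: R2 e2 T_def G_def algebra_simps)
    qed
    then show ?thesis using nN eN by auto
  qed
qed

end
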